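(* Let $F\in\mathcal{SF}_n$ be a rooted spanning forest on $[n]$ with non-root vertices $v_1,\dots,v_k$ listed in some order. Define $F_0$ to be the forest on $[n]$ with no edges (all vertices roots), and for $i=1,\dots,k$ let $F_i$ be obtained from $F_{i-1}$ by adding the edge $\{v_i,p(v_i)\}$ and setting $R(F_i)=R(F_{i-1})\setminus\{v_i\}$, so $F_k=F$. Then $F_0\lessdot F_1\lessdot\cdots\lessdot F_k$ is a saturated chain in $\mathcal{SF}_n$ if and only if the listing $v_1,\dots,v_k$ is a linear extension, i.e. whenever $v_i$ is a descendant of $v_j$ in $F$ we have $i<j$.
   Context: A rooted spanning forest on $[n]$ is a spanning forest of the complete graph on $[n]$ with one distinguished vertex (root) in each connected component; $E(F)$ is its edge set and $R(F)$ its set of roots. $\mathcal{SF}_n$ is the set of such forests ordered by $F_1\le F_2$ iff $E(F_1)\subseteq E(F_2)$ and $R(F_2)\subseteq R(F_1)$; equivalently $F_1\lessdot F_2$ iff $F_2$ is obtained from $F_1$ by adding an edge $\{x,y\}$ between two roots $x,y\in R(F_1)$ (of different trees) and keeping exactly one of $x,y$ as root. For a non-root vertex $y$, its parent $p(y)$ is the neighbor of $y$ on the unique path from $y$ to the root of its component; $x$ is an ancestor of $y$ (and $y$ a descendant of $x$) if $x$ lies on the path from $y$ to its root. *)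

theory Defs
  imports Main
begin

text \<open>A rooted spanning forest on [n] = {1..n} is represented as a pair (E, R):
  E is its edge set (a set of 2-element subsets of {1..n}) and R its set of roots.\<close>

type_synonym forest = "nat set set \<times> nat set"

definition edges_of :: "forest \<Rightarrow> nat set set" where "edges_of F = fst F"
definition roots_of :: "forest \<Rightarrow> nat set" where "roots_of F = snd F"

definition is_path :: "nat set set \<Rightarrow> nat list \<Rightarrow> bool" where
  "is_path E xs \<longleftrightarrow> xs \<noteq> [] \<and> distinct xs \<and>
     (\<forall>i. Suc i < length xs \<longrightarrow> {xs ! i, xs ! Suc i} \<in> E)"

definition connected_in :: "nat set set \<Rightarrow> nat \<Rightarrow> nat \<Rightarrow> bool" where
  "connected_in E x y \<longleftrightarrow> (\<exists>xs. is_path E xs \<and> hd xs = x \<and> last xs = y)"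

definition has_cycle :: "nat set set \<Rightarrow> bool" where
  "has_cycle E \<longleftrightarrow> (\<exists>xs. 3 \<le> length xs \<and> is_path E xs \<and> {last xs, hd xs} \<in> E)"

definition SF :: "nat \<Rightarrow> forest set" where
  "SF n = {(E, R).
      E \<subseteq> {e. \<exists>x y. e = {x, y} \<and> x \<noteq> y \<and> x \<in> {1..n} \<and> y \<in> {1..n}} \<and>
      \<not> has_cycle E \<and> R \<subseteq> {1..n} \<and>
      (\<forall>x\<in>{1..n}. \<exists>!r. r \<in> R \<and> connected_in E x r)}"

definition sf_le :: "forest \<Rightarrow> forest \<Rightarrow> bool" where
  "sf_le F1 F2 \<longleftrightarrow> edges_of F1 \<subseteq> edges_of F2 \<and> roots_of F2 \<subseteq> roots_of F1"

text \<open>The covering relation of SF_n, as characterised in the paper: F2 is obtained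
  from F1 by adding an edge between two roots of different trees of F1 and keeping
  exactly one of them as a root.\<close>
definition sf_covers :: "nat \<Rightarrow> forest \<Rightarrow> forest \<Rightarrow> bool" where
  "sf_covers n F1 F2 \<longleftrightarrow> F1 \<in> SF n \<and> F2 \<in> SF n \<and>
     (\<exists>x y. x \<in> roots_of F1 \<and> y \<in> roots_of F1 \<and> \<not> connected_in (edges_of F1) x y \<and>
        edges_of F2 = insert {x, y} (edges_of F1) \<and>
        (roots_of F2 = roots_of F1 - {x} \<or> roots_of F2 = roots_of F1 - {y}))"

definition root_path :: "forest \<Rightarrow> nat \<Rightarrow> nat list \<Rightarrow> bool" where
  "root_path F y xs \<longleftrightarrow> is_path (edges_of F) xs \<and> hd xs = y \<and> last xs \<in> roots_of F"

definition parent :: "forest \<Rightarrow> nat \<Rightarrow> nat" where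
  "parent F y = (THE z. \<exists>xs. root_path F y (y # z # xs))"

definition ancestor :: "forest \<Rightarrow> nat \<Rightarrow> nat \<Rightarrow> bool" where
  "ancestor F x y \<longleftrightarrow> (\<exists>xs. root_path F y xs \<and> x \<in> set xs)"

definition descendant :: "forest \<Rightarrow> nat \<Rightarrow> nat \<Rightarrow> bool" where
  "descendant F y x \<longleftrightarrow> ancestor F x y \<and> x \<noteq> y"

text \<open>The forest F_i built from the listing vs (0-based: uses the first i entries).\<close>
definition chain_forest :: "nat \<Rightarrow> forest \<Rightarrow> nat list \<Rightarrow> nat \<Rightarrow> forest" where
  "chain_forest n F vs i =
     ((\<lambda>v. {v, parent F v}) ` set (take i vs), {1..n} - set (take i vs))"

end

theory Submission imports Defs begin

lemma is_path_Nil[simp]: "\<not> is_path E []" by (simp add: is_path_def)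
lemma is_path_single[simp]: "is_path E [a]" by (simp add: is_path_def)

lemma is_path_Cons:
  "is_path E (a # xs) \<longleftrightarrow> a \<notin> set xs \<and> (xs = [] \<or> ({a, hd xs} \<in> E \<and> is_path E xs))"
proof (cases xs)
  case Nil then show ?thesis by simp
next
  case (Cons b ys)
  have "(\<forall>i. Suc i < length (a#b#ys) \<longrightarrow> {(a#b#ys) ! i, (a#b#ys) ! Suc i} \<in> E) \<longleftrightarrow>
        {a,b} \<in> E \<and> (\<forall>i. Suc i < length (b#ys) \<longrightarrow> {(b#ys) ! i, (b#ys) ! Suc i} \<in> E)"
    (is "?L \<longleftrightarrow> ?R")
  proof
    assume ?L
    then show ?R by (metis Suc_less_eq length_Cons nth_Cons_Suc nth_Cons_0 zero_less_Suc)
  next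
    assume R: ?R
    show ?L
    proof (intro allI impI)
      fix i assume "Suc i < length (a#b#ys)"
      then show "{(a#b#ys) ! i, (a#b#ys) ! Suc i} \<in> E" using R by (cases i) auto
    qed
  qed
  then show ?thesis using Cons by (auto simp: is_path_def)
qed

lemma is_path_rev: "is_path E xs \<Longrightarrow> is_path E (rev xs)"
proof (induction xs)
  case Nil then show ?case by simp
next
  case (Cons a xs)
  show ?case
  proof (cases xs)
    case Nil then show ?thesis by simp
  next
    case (Cons b ys)
    have p: "is_path E (rev xs)" "{a, hd xs} \<in> E" "a \<notin> set xs" using Cons.prems Cons.IH Cons by (auto simp: is_path_Cons)
    have "is_path E (rev xs @ [a])"
      unfolding is_path_def
    proof (intro conjI allI impI)
      show "rev xs @ [a] \<noteq> []" by simp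
      show "distinct (rev xs @ [a])" using p is_path_def by auto
    next
      fix i assume i: "Suc i < length (rev xs @ [a])"
      show "{(rev xs @ [a]) ! i, (rev xs @ [a]) ! Suc i} \<in> E"
      proof (cases "Suc i < length (rev xs)")
        case True then show ?thesis using p(1) by (simp add: is_path_def nth_append)
      next
        case False
        then have "i = length xs - 1" "xs \<noteq> []" using i Cons by auto
        then have "(rev xs @ [a]) ! i = hd xs" "(rev xs @ [a]) ! Suc i = a"
          by (auto simp: nth_append hd_conv_nth rev_nth)
        then show ?thesis using p(2) by (simp add: insert_commute)
      qed
    qed
    then show ?thesis by simp
  qed
qed

lemma is_path_suffix: "is_path E (p @ q) \<Longrightarrow> q \<noteq> [] \<Longrightarrow> is_path E q"
  by (induction p) (auto simp: is_path_Cons)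

lemma path_trans:
  "is_path E xs \<Longrightarrow> is_path E ys \<Longrightarrow> last xs = hd ys \<Longrightarrow>
   \<exists>zs. is_path E zs \<and> hd zs = hd xs \<and> last zs = last ys \<and> set zs \<subseteq> set xs \<union> set ys"
proof (induction xs)
  case Nil then show ?case by simp
next
  case (Cons a xs)
  show ?case
  proof (cases "xs = []")
    case True then show ?thesis using Cons.prems by (intro exI[of _ ys]) (auto simp: is_path_def)
  next
    case False
    have px: "is_path E xs" "{a, hd xs} \<in> E" using Cons.prems False by (auto simp: is_path_Cons)
    obtain zs where zs: "is_path E zs" "hd zs = hd xs" "last zs = last ys" "set zs \<subseteq> set xs \<union> set ys"
      using Cons.IH[OF px(1) Cons.prems(2)] Cons.prems(3) False by auto
    show ?thesis
    proof (cases "a \<in> set zs")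
      case True
      then obtain p q where pq: "zs = p @ a # q" by (meson split_list)
      have aq: "is_path E (a # q)" using zs(1) unfolding pq by (rule is_path_suffix) simp
      have "last (a # q) = last zs" using pq by simp
      then show ?thesis using aq zs pq by (intro exI[of _ "a # q"]) auto
    next
      case False
      then show ?thesis using zs px by (intro exI[of _ "a # zs"]) (auto simp: is_path_Cons)
    qed
  qed
qed
lemma SF_D:
  assumes "F \<in> SF n"
  shows "edges_of F \<subseteq> {e. \<exists>x y. e = {x, y} \<and> x \<noteq> y \<and> x \<in> {1..n} \<and> y \<in> {1..n}}"
    "\<not> has_cycle (edges_of F)" "roots_of F \<subseteq> {1..n}"
    "\<forall>x\<in>{1..n}. \<exists>!r. r \<in> roots_of F \<and> connected_in (edges_of F) x r"
  using assms by (cases F; auto simp: SF_def edges_of_def roots_of_def)+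

lemma SF_edge:
  assumes "F \<in> SF n" "{a, b} \<in> edges_of F"
  shows "a \<in> {1..n}" "b \<in> {1..n}" "a \<noteq> b"
  using SF_D(1)[OF assms(1)] assms(2) by (auto simp: doubleton_eq_iff)

lemma root_unique:
  assumes "F \<in> SF n" "x \<in> {1..n}" "r1 \<in> roots_of F" "r2 \<in> roots_of F"
    "connected_in (edges_of F) x r1" "connected_in (edges_of F) x r2"
  shows "r1 = r2"
  using SF_D(4)[OF assms(1)] assms(2-) by blast

lemma parent_exists:
  assumes "F \<in> SF n" "v \<in> {1..n}" "v \<notin> roots_of F"
  shows "\<exists>z xs. root_path F v (v # z # xs)"
proof -
  obtain r where r: "r \<in> roots_of F" "connected_in (edges_of F) v r"
    using SF_D(4)[OF assms(1)] assms(2) by blast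
  then obtain xs where xs: "is_path (edges_of F) xs" "hd xs = v" "last xs = r"
    by (auto simp: connected_in_def)
  then obtain ys where "xs = v # ys" by (cases xs) auto
  moreover have "ys \<noteq> []" using xs r assms(3) \<open>xs = v # ys\<close> by auto
  ultimately obtain z zs where "xs = v # z # zs" by (cases ys) auto
  moreover have "root_path F v xs" using xs r by (simp add: root_path_def)
  ultimately show ?thesis by blast
qed

lemma parent_unique:
  assumes "F \<in> SF n" "v \<in> {1..n}"
    "root_path F v (v # z1 # xs1)" "root_path F v (v # z2 # xs2)"
  shows "z1 = z2"
proof (rule ccontr)
  assume ne: "z1 \<noteq> z2"
  let ?E = "edges_of F"
  have p1: "is_path ?E (v # z1 # xs1)" "last (v # z1 # xs1) \<in> roots_of F"
    and p2: "is_path ?E (v # z2 # xs2)" "last (v # z2 # xs2) \<in> roots_of F"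
    using assms by (auto simp: root_path_def)
  have c1: "connected_in ?E v (last (v # z1 # xs1))" unfolding connected_in_def
    using p1(1) by (intro exI[of _ "v # z1 # xs1"]) simp
  have c2: "connected_in ?E v (last (v # z2 # xs2))" unfolding connected_in_def
    using p2(1) by (intro exI[of _ "v # z2 # xs2"]) simp
  have "last (v # z1 # xs1) = last (v # z2 # xs2)"
    using root_unique[OF assms(1,2) p1(2) p2(2) c1 c2] .
  then have eqlast: "last (z1 # xs1) = hd (rev (z2 # xs2))" by (simp add: hd_rev)
  have q1: "is_path ?E (z1 # xs1)" "{v, z1} \<in> ?E" "v \<notin> set (z1 # xs1)"
    using p1(1) by (auto simp: is_path_Cons)
  have q2: "is_path ?E (z2 # xs2)" "{v, z2} \<in> ?E" "v \<notin> set (z2 # xs2)"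
    using p2(1) by (auto simp: is_path_Cons)
  obtain zs where zs: "is_path ?E zs" "hd zs = z1" "last zs = z2"
    "set zs \<subseteq> set (z1 # xs1) \<union> set (z2 # xs2)"
    using path_trans[OF q1(1) is_path_rev[OF q2(1)] eqlast] by (auto simp: last_rev)
  have vz: "v \<notin> set zs" using zs(4) q1(3) q2(3) by blast
  have len: "2 \<le> length zs"
  proof (rule ccontr)
    assume "\<not> 2 \<le> length zs"
    moreover have "zs \<noteq> []" using zs(1) by auto
    ultimately obtain a where "zs = [a]" by (cases zs rule: remdups_adj.cases) auto
    then show False using zs ne by simp
  qed
  have "is_path ?E (v # zs)" using zs vz q1(2) by (auto simp: is_path_Cons)
  moreover have "{last (v # zs), hd (v # zs)} \<in> ?E"
    using zs(1,3) q2(2) by (auto simp: insert_commute)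
  ultimately have "has_cycle ?E" unfolding has_cycle_def using len
    by (intro exI[of _ "v # zs"]) auto
  then show False using SF_D(2)[OF assms(1)] by simp
qed

lemma parent_props:
  assumes "F \<in> SF n" "v \<in> {1..n}" "v \<notin> roots_of F"
  shows "\<exists>xs. root_path F v (v # parent F v # xs)" "parent F v \<noteq> v"
    "parent F v \<in> {1..n}" "{v, parent F v} \<in> edges_of F"
proof -
  have ex1: "\<exists>!z. \<exists>xs. root_path F v (v # z # xs)"
    using parent_exists[OF assms] parent_unique[OF assms(1,2)] by blast
  show pp: "\<exists>xs. root_path F v (v # parent F v # xs)"
    unfolding parent_def by (rule theI'[OF ex1])
  then obtain xs where "root_path F v (v # parent F v # xs)" by blast
  then have "is_path (edges_of F) (v # parent F v # xs)" by (simp add: root_path_def)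
  then show "{v, parent F v} \<in> edges_of F" "parent F v \<noteq> v"
    by (auto simp: is_path_Cons)
  then show "parent F v \<in> {1..n}" using SF_edge[OF assms(1)] by blast
qed

lemma root_path_parent:
  assumes "F \<in> SF n" "v \<in> {1..n}" "v \<notin> roots_of F" "root_path F v (v # z # xs)"
  shows "z = parent F v"
  using parent_props(1)[OF assms(1-3)] parent_unique[OF assms(1,2) assms(4)] by blast

lemma orient:
  assumes "is_path ((\<lambda>v. {v, p v}) ` T) xs" "hd xs \<notin> T"
  shows "Suc i < length xs \<Longrightarrow> xs ! Suc i \<in> T \<and> p (xs ! Suc i) = xs ! i"
proof (induction i)
  case 0
  have "{xs ! 0, xs ! Suc 0} \<in> (\<lambda>v. {v, p v}) ` T" using assms(1) 0 by (simp add: is_path_def)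
  then obtain u where u: "u \<in> T" "{xs ! 0, xs ! Suc 0} = {u, p u}" by blast
  have "xs ! 0 \<notin> T" using assms(2) assms(1) by (simp add: hd_conv_nth is_path_def)
  then show ?case using u by (auto simp: doubleton_eq_iff)
next
  case (Suc i)
  have d: "distinct xs" using assms(1) by (simp add: is_path_def)
  have IH: "xs ! Suc i \<in> T" "p (xs ! Suc i) = xs ! i" using Suc by auto
  have "{xs ! Suc i, xs ! Suc (Suc i)} \<in> (\<lambda>v. {v, p v}) ` T" using assms(1) Suc.prems by (simp add: is_path_def)
  then obtain u where u: "u \<in> T" "{xs ! Suc i, xs ! Suc (Suc i)} = {u, p u}" by blast
  have ne: "xs ! i \<noteq> xs ! Suc (Suc i)" using d Suc.prems by (simp add: nth_eq_iff_index_eq)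
  have ne2: "xs ! Suc i \<noteq> xs ! Suc (Suc i)" using d Suc.prems by (simp add: nth_eq_iff_index_eq)
  from u IH ne ne2 show ?case by (auto simp: doubleton_eq_iff)
qed

lemma not_conn:
  assumes "connected_in ((\<lambda>v. {v, p v}) ` T) a b" "a \<notin> T" "b \<notin> T"
  shows "a = b"
proof -
  obtain xs where xs: "is_path ((\<lambda>v. {v, p v}) ` T) xs" "hd xs = a" "last xs = b"
    using assms(1) by (auto simp: connected_in_def)
  have ne: "xs \<noteq> []" using xs by auto
  show ?thesis
  proof (cases "length xs = 1")
    case True
    then obtain c where "xs = [c]" by (cases xs rule: remdups_adj.cases) auto
    then show ?thesis using xs by simp
  next
    case False
    then have "Suc (length xs - 2) < length xs" using ne by (cases xs) auto
    from orient[OF xs(1), of "length xs - 2", OF _ this] xs(2) assms(2)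
    have "xs ! Suc (length xs - 2) \<in> T" by auto
    moreover have "Suc (length xs - 2) = length xs - 1" using False ne by (cases xs) auto
    ultimately have "last xs \<in> T" using ne by (simp add: last_conv_nth)
    then show ?thesis using xs assms by simp
  qed
qed

lemma cycle_nbrs:
  assumes "is_path E xs" "{last xs, hd xs} \<in> E" "3 \<le> length xs" "j < length xs"
  shows "\<exists>a b. a \<noteq> b \<and> a \<in> set xs \<and> b \<in> set xs \<and> {xs ! j, a} \<in> E \<and> {xs ! j, b} \<in> E"
proof -
  let ?m = "length xs"
  have d: "distinct xs" and ed: "\<And>i. Suc i < ?m \<Longrightarrow> {xs ! i, xs ! Suc i} \<in> E"
    using assms(1) by (auto simp: is_path_def)
  have ne: "xs \<noteq> []" using assms(3) by auto
  have lh: "{xs ! (?m - 1), xs ! 0} \<in> E" using assms(2) ne by (simp add: last_conv_nth hd_conv_nth)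
  have neq: "\<And>i k. i < ?m \<Longrightarrow> k < ?m \<Longrightarrow> i \<noteq> k \<Longrightarrow> xs ! i \<noteq> xs ! k"
    using d by (simp add: nth_eq_iff_index_eq)
  have mem: "\<And>i. i < ?m \<Longrightarrow> xs ! i \<in> set xs" by simp
  consider "j = 0" | "j = ?m - 1" | "0 < j \<and> j < ?m - 1" using assms(4) by linarith
  then show ?thesis
  proof cases
    case 1
    have m0: "xs ! 1 \<in> set xs" "xs ! (?m - 1) \<in> set xs" using assms(3) by (rule_tac nth_mem, linarith)+
    have "xs ! 1 \<noteq> xs ! (?m - 1)" using neq[of 1 "?m - 1"] assms(3) by linarith
    moreover have "{xs ! j, xs ! 1} \<in> E" "{xs ! j, xs ! (?m - 1)} \<in> E"
      using ed[of 0] lh 1 assms(3) by (auto simp: insert_commute)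
    ultimately show ?thesis using m0 by blast
  next
    case 2
    then have "Suc (?m - 2) = ?m - 1" using assms(3) by linarith
    then have e: "{xs ! (?m - 2), xs ! (?m - 1)} \<in> E" using ed[of "?m - 2"] assms(3) by simp
    have "xs ! 0 \<noteq> xs ! (?m - 2)" using assms(3) neq[of 0 "?m - 2"] ne by simp
    have m0: "xs ! 0 \<in> set xs" "xs ! (?m - 2) \<in> set xs" using assms(3) by (rule_tac nth_mem, linarith)+
    have "{xs ! j, xs ! 0} \<in> E" "{xs ! j, xs ! (?m - 2)} \<in> E" using lh e 2 by (auto simp: insert_commute)
    then show ?thesis using m0 \<open>xs ! 0 \<noteq> xs ! (?m - 2)\<close> by blast
  next
    case 3
    then have "Suc (j - 1) = j" by linarith
    have m0: "xs ! (j - 1) \<in> set xs" "xs ! Suc j \<in> set xs" using 3 by (rule_tac nth_mem, linarith)+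
    have "xs ! (j - 1) \<noteq> xs ! Suc j" using neq[of "j - 1" "Suc j"] 3 by linarith
    moreover have "{xs ! j, xs ! (j - 1)} \<in> E" "{xs ! j, xs ! Suc j} \<in> E"
      using ed[of "j - 1"] ed[of j] 3 \<open>Suc (j - 1) = j\<close> by (auto simp: insert_commute)
    ultimately show ?thesis using m0 by blast
  qed
qed

lemma no_cycle:
  assumes rank: "\<And>v. v \<in> T \<Longrightarrow> p v \<in> T \<Longrightarrow> (f v :: nat) < f (p v)"
  shows "\<not> has_cycle ((\<lambda>v. {v, p v}) ` T)"
proof
  let ?E = "(\<lambda>v. {v, p v}) ` T"
  assume "has_cycle ?E"
  then obtain xs where xs: "3 \<le> length xs" "is_path ?E xs" "{last xs, hd xs} \<in> ?E"
    by (auto simp: has_cycle_def)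
  have e01: "{xs ! 0, xs ! 1} \<in> ?E" using xs by (simp add: is_path_def)
  then obtain u where "u \<in> T" "{xs ! 0, xs ! 1} = {u, p u}" by blast
  moreover have "xs ! 0 \<in> set xs" "xs ! 1 \<in> set xs" using xs(1) by (auto intro!: nth_mem)
  ultimately have "u \<in> set xs" by (auto simp: doubleton_eq_iff)
  then have Sne: "set xs \<inter> T \<noteq> {}" using \<open>u \<in> T\<close> by blast
  define S where "S = set xs \<inter> T"
  have fin: "finite (f ` S)" unfolding S_def by simp
  have "Min (f ` S) \<in> f ` S" using Sne fin unfolding S_def by (intro Min_in) auto
  then obtain w where w: "w \<in> S" "f w = Min (f ` S)" by auto
  have wmin: "\<And>y. y \<in> S \<Longrightarrow> f w \<le> f y" using w fin by simp
  obtain j where j: "j < length xs" "xs ! j = w" using w(1) unfolding S_def by (auto simp: in_set_conv_nth)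
  obtain a b where ab: "a \<noteq> b" "a \<in> set xs" "b \<in> set xs" "{w, a} \<in> ?E" "{w, b} \<in> ?E"
    using cycle_nbrs[OF xs(2) xs(3) xs(1) j(1)] j(2) by blast
  have key: "p w = c" if cm: "c \<in> set xs" and ce: "{w, c} \<in> ?E" for c
  proof -
    obtain u where u: "u \<in> T" "{w, c} = {u, p u}" using ce by blast
    show ?thesis
    proof (cases "u = w")
      case True then show ?thesis using u by (auto simp: doubleton_eq_iff)
    next
      case False
      then have "u = c" "p u = w" using u by (auto simp: doubleton_eq_iff)
      then have "f c < f w" using rank[of c] u w(1) unfolding S_def by auto
      moreover have "c \<in> S" using \<open>u = c\<close> u cm unfolding S_def by auto
      ultimately show ?thesis using wmin by fastforce
    qed
  qed
  show False using key[OF ab(2,4)] key[OF ab(3,5)] ab(1) by simp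
qed

definition rk :: "nat list \<Rightarrow> nat \<Rightarrow> nat" where
  "rk vs v = (THE k. k < length vs \<and> vs ! k = v)"

lemma rk_nth: "distinct vs \<Longrightarrow> i < length vs \<Longrightarrow> rk vs (vs ! i) = i"
  unfolding rk_def by (rule the_equality) (auto simp: nth_eq_iff_index_eq)

lemma rk_mem: "distinct vs \<Longrightarrow> v \<in> set vs \<Longrightarrow> rk vs v < length vs \<and> vs ! rk vs v = v"
  by (metis in_set_conv_nth rk_nth)

lemma nth_in_take: "distinct vs \<Longrightarrow> j < length vs \<Longrightarrow> vs ! j \<in> set (take m vs) \<longleftrightarrow> j < m"
proof
  assume d: "distinct vs" and j: "j < length vs" and "vs ! j \<in> set (take m vs)"
  then obtain i where i: "i < length (take m vs)" "take m vs ! i = vs ! j" by (auto simp: in_set_conv_nth)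
  then have "vs ! i = vs ! j" "i < m" "i < length vs" by auto
  then show "j < m" using d j by (simp add: nth_eq_iff_index_eq)
next
  assume "j < length vs" "j < m"
  then show "vs ! j \<in> set (take m vs)" by (metis in_set_conv_nth length_take min_less_iff_conj nth_take)
qed

definition Pcond :: "forest \<Rightarrow> nat list \<Rightarrow> bool" where
  "Pcond F vs \<longleftrightarrow> (\<forall>k < length vs. parent F (vs ! k) \<notin> set (take (Suc k) vs))"

lemma Pcond_rk:
  assumes "Pcond F vs" "distinct vs" "v \<in> set vs" "parent F v \<in> set vs"
  shows "rk vs v < rk vs (parent F v)"
proof -
  define k where "k = rk vs v"
  define j where "j = rk vs (parent F v)"
  have k: "k < length vs" "vs ! k = v" using rk_mem[OF assms(2,3)] k_def by auto
  have j: "j < length vs" "vs ! j = parent F v" using rk_mem[OF assms(2,4)] j_def by auto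
  have "parent F v \<notin> set (take (Suc k) vs)" using assms(1) k unfolding Pcond_def by auto
  then have "\<not> j < Suc k" using nth_in_take[OF assms(2) j(1)] j(2) by simp
  then show ?thesis using k_def j_def by simp
qed

lemma chain_simps:
  "edges_of (chain_forest n F vs i) = (\<lambda>v. {v, parent F v}) ` set (take i vs)"
  "roots_of (chain_forest n F vs i) = {1..n} - set (take i vs)"
  by (simp_all add: chain_forest_def edges_of_def roots_of_def)

lemma conn_refl: "connected_in E x x"
  unfolding connected_in_def by (intro exI[of _ "[x]"]) simp

lemma covers_Pcond:
  assumes d: "distinct vs" and sv: "set vs \<subseteq> {1..n}"
    and cov: "\<forall>i < length vs. sf_covers n (chain_forest n F vs i) (chain_forest n F vs (Suc i))"
  shows "Pcond F vs"
  unfolding Pcond_def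
proof (intro allI impI)
  fix k assume k: "k < length vs"
  define v where "v = vs ! k"
  let ?T = "set (take k vs)"
  have tk: "take (Suc k) vs = take k vs @ [v]" using k v_def by (simp add: take_Suc_conv_app_nth)
  have vT: "v \<notin> ?T" using nth_in_take[OF d k, of k] v_def by simp
  have vn: "v \<in> {1..n}" using sv nth_mem[OF k] v_def by blast
  let ?R = "{1..n} - ?T"
  let ?ET = "(\<lambda>v. {v, parent F v}) ` ?T"
  have cv: "sf_covers n (chain_forest n F vs k) (chain_forest n F vs (Suc k))" using cov k by blast
  obtain x y where H0: "x \<in> roots_of (chain_forest n F vs k)" "y \<in> roots_of (chain_forest n F vs k)"
     "\<not> connected_in (edges_of (chain_forest n F vs k)) x y"
     "edges_of (chain_forest n F vs (Suc k)) = insert {x, y} (edges_of (chain_forest n F vs k))"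
     "roots_of (chain_forest n F vs (Suc k)) = roots_of (chain_forest n F vs k) - {x} \<or>
      roots_of (chain_forest n F vs (Suc k)) = roots_of (chain_forest n F vs k) - {y}"
    using cv unfolding sf_covers_def by metis
  note H = H0[unfolded chain_simps]
  have e1: "(\<lambda>v. {v, parent F v}) ` set (take (Suc k) vs) = insert {v, parent F v} ?ET"
    using tk by simp
  have e2: "{1..n} - set (take (Suc k) vs) = ?R - {v}" using tk by auto
  have vR: "v \<in> ?R" using vn vT by blast
  have xy4: "?R - {v} = ?R - {x} \<or> ?R - {v} = ?R - {y}"
    using H(5) unfolding e2 .
  have xy5: "insert {v, parent F v} ?ET = insert {x, y} ?ET"
    using H(4) unfolding e1 .
  note xy = H(1,2,3) xy4 xy5
  have vxy: "v = x \<or> v = y"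
  proof (rule ccontr)
    assume "\<not> (v = x \<or> v = y)"
    then have xv: "x \<in> ?R - {v}" and yv: "y \<in> ?R - {v}" using xy(1,2) by auto
    show False using xy4
    proof
      assume eq: "?R - {v} = ?R - {x}"
      show False using xv unfolding eq by blast
    next
      assume eq: "?R - {v} = ?R - {y}"
      show False using yv unfolding eq by blast
    qed
  qed
  have xyne: "x \<noteq> y" using xy(3) conn_refl by metis
  have notin: "{x, y} \<notin> ?ET"
  proof
    assume "{x, y} \<in> ?ET"
    then obtain u where u: "u \<in> ?T" "{x, y} = {u, parent F u}" by blast
    then have "u = x \<or> u = y" by (auto simp: doubleton_eq_iff)
    then show False using u(1) xy(1,2) by blast
  qed
  have "{x, y} \<in> insert {v, parent F v} ?ET" unfolding xy5 by (rule insertI1)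
  then have xyv: "{x, y} = {v, parent F v}" using notin by blast
  have "parent F v \<in> {x, y} - {v}" using xyne vxy xyv by (auto simp: doubleton_eq_iff)
  then have "parent F v \<notin> ?T \<and> parent F v \<noteq> v" using xy(1,2) by blast
  then show "parent F (vs ! k) \<notin> set (take (Suc k) vs)" using tk v_def by simp
qed

lemma rootpath_rk:
  assumes F: "F \<in> SF n" and d: "distinct vs" and sv: "set vs = {1..n} - roots_of F"
    and P: "Pcond F vs"
  shows "is_path (edges_of F) xs \<Longrightarrow> last xs \<in> roots_of F \<Longrightarrow> hd xs \<in> set vs \<Longrightarrow>
         x \<in> set xs \<Longrightarrow> x \<in> set vs \<Longrightarrow> x \<noteq> hd xs \<Longrightarrow> rk vs (hd xs) < rk vs x"
proof (induction xs)
  case Nil then show ?case by simp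
next
  case (Cons a xs)
  have an: "a \<in> {1..n}" "a \<notin> roots_of F" using Cons.prems(3) sv by auto
  have "xs \<noteq> []" using Cons.prems(2) an(2) by auto
  then obtain z rest where xs: "xs = z # rest" by (cases xs) auto
  have rp: "root_path F a (a # z # rest)" using Cons.prems(1,2) xs by (simp add: root_path_def)
  have zp: "z = parent F a" using root_path_parent[OF F an rp] .
  have pz: "is_path (edges_of F) (z # rest)" "{a, z} \<in> edges_of F"
    using Cons.prems(1) xs by (auto simp: is_path_Cons)
  have zn: "z \<in> {1..n}" using SF_edge(2)[OF F pz(2)] .
  show ?case
  proof (cases "x = z")
    case True
    then have "parent F a \<in> set vs" using Cons.prems(5) zp by simp
    then show ?thesis using Pcond_rk[OF P d Cons.prems(3)] True zp by simp
  next
    case False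
    then have xr: "x \<in> set rest" using Cons.prems(4,6) xs by simp
    have zR: "z \<notin> roots_of F"
    proof
      assume zR: "z \<in> roots_of F"
      have c1: "connected_in (edges_of F) z (last (z # rest))" unfolding connected_in_def
        using pz(1) by (intro exI[of _ "z # rest"]) simp
      have "last (z # rest) \<in> roots_of F" using Cons.prems(2) xs by simp
      then have "last (z # rest) = z" using root_unique[OF F zn _ zR c1 conn_refl] by blast
      moreover have "rest \<noteq> []" using xr by auto
      ultimately have "z \<in> set rest" by (metis last_ConsR last_in_set)
      then show False using pz(1) by (simp add: is_path_Cons)
    qed
    then have zv: "z \<in> set vs" using zn sv by simp
    have "rk vs z < rk vs x"
      using Cons.IH[OF _ _ _ _ Cons.prems(5)] pz(1) xs Cons.prems(2) zv xr False by auto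
    moreover have "rk vs a < rk vs z" using Pcond_rk[OF P d Cons.prems(3)] zv zp by simp
    ultimately show ?thesis by simp
  qed
qed

lemma Pcond_linext:
  assumes F: "F \<in> SF n" and d: "distinct vs" and sv: "set vs = {1..n} - roots_of F"
    and P: "Pcond F vs"
  shows "\<forall>i < length vs. \<forall>j < length vs. descendant F (vs ! i) (vs ! j) \<longrightarrow> i < j"
proof (intro allI impI)
  fix i j assume i: "i < length vs" and j: "j < length vs" and de: "descendant F (vs ! i) (vs ! j)"
  then obtain xs where xs: "root_path F (vs ! i) xs" "vs ! j \<in> set xs" "vs ! j \<noteq> vs ! i"
    by (auto simp: descendant_def ancestor_def)
  have "rk vs (vs ! i) < rk vs (vs ! j)"
    using rootpath_rk[OF F d sv P, of xs "vs ! j"] xs i j by (auto simp: root_path_def)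
  then show "i < j" using rk_nth[OF d i] rk_nth[OF d j] by simp
qed

lemma linext_Pcond:
  assumes F: "F \<in> SF n" and d: "distinct vs" and sv: "set vs = {1..n} - roots_of F"
    and L: "\<forall>i < length vs. \<forall>j < length vs. descendant F (vs ! i) (vs ! j) \<longrightarrow> i < j"
  shows "Pcond F vs"
  unfolding Pcond_def
proof (intro allI impI)
  fix k assume k: "k < length vs"
  define v where "v = vs ! k"
  have vn: "v \<in> {1..n}" "v \<notin> roots_of F" using nth_mem[OF k] sv v_def by auto
  obtain xs where xs: "root_path F v (v # parent F v # xs)" using parent_props(1)[OF F vn] by blast
  have pne: "parent F v \<noteq> v" using parent_props(2)[OF F vn] .
  show "parent F (vs ! k) \<notin> set (take (Suc k) vs)"
  proof
    assume pin: "parent F (vs ! k) \<in> set (take (Suc k) vs)"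
    then have "parent F v \<in> set vs" using v_def by (meson in_set_takeD)
    then obtain j where j: "j < length vs" "vs ! j = parent F v" by (auto simp: in_set_conv_nth)
    have "descendant F v (parent F v)" unfolding descendant_def ancestor_def
      using xs pne by auto
    then have "k < j" using L k j v_def by auto
    moreover have "j < Suc k" using pin nth_in_take[OF d j(1)] j(2) v_def by simp
    ultimately show False by simp
  qed
qed

lemma conn_sym: "connected_in E a b \<Longrightarrow> connected_in E b a"
  unfolding connected_in_def by (metis is_path_rev hd_rev last_rev)

lemma conn_trans: "connected_in E a b \<Longrightarrow> connected_in E b c \<Longrightarrow> connected_in E a c"
  unfolding connected_in_def by (metis path_trans)

lemma chain_SF:
  assumes F: "F \<in> SF n" and d: "distinct vs" and sv: "set vs = {1..n} - roots_of F"
    and P: "Pcond F vs"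
  shows "chain_forest n F vs i \<in> SF n"
proof -
  let ?T = "set (take i vs)"
  let ?p = "parent F"
  let ?ET = "(\<lambda>v. {v, ?p v}) ` ?T"
  have Tv: "\<And>v. v \<in> ?T \<Longrightarrow> v \<in> set vs" by (meson in_set_takeD)
  have vprops: "\<And>v. v \<in> ?T \<Longrightarrow> v \<in> {1..n} \<and> ?p v \<in> {1..n} \<and> ?p v \<noteq> v"
  proof -
    fix v assume "v \<in> ?T"
    then have "v \<in> {1..n}" "v \<notin> roots_of F" using Tv sv by auto
    then show "v \<in> {1..n} \<and> ?p v \<in> {1..n} \<and> ?p v \<noteq> v" using parent_props[OF F] by blast
  qed
  have e: "?ET \<subseteq> {e. \<exists>x y. e = {x, y} \<and> x \<noteq> y \<and> x \<in> {1..n} \<and> y \<in> {1..n}}"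
    using vprops by blast
  have rank: "\<And>v. v \<in> ?T \<Longrightarrow> ?p v \<in> ?T \<Longrightarrow> rk vs v < rk vs (?p v)"
    using Pcond_rk[OF P d] Tv by blast
  have nc: "\<not> has_cycle ?ET" using no_cycle[of ?T ?p "rk vs", OF rank] by blast
  have ex: "\<exists>r. r \<in> {1..n} - ?T \<and> connected_in ?ET x r" if "x \<in> {1..n}" for x
    using that
  proof (induction "length vs - rk vs x" arbitrary: x rule: less_induct)
    case less
    show ?case
    proof (cases "x \<in> ?T")
      case False then show ?thesis using less.prems conn_refl by blast
    next
      case True
      have px: "?p x \<in> {1..n}" "?p x \<noteq> x" using vprops[OF True] by auto
      have c1: "connected_in ?ET x (?p x)" unfolding connected_in_def
        using True px by (intro exI[of _ "[x, ?p x]"]) (auto simp: is_path_Cons)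
      show ?thesis
      proof (cases "?p x \<in> ?T")
        case False then show ?thesis using c1 px by blast
      next
        case True2: True
        have "rk vs x < rk vs (?p x)" using rank[OF True True2] .
        moreover have "rk vs (?p x) < length vs" using rk_mem[OF d Tv[OF True2]] by simp
        ultimately have "length vs - rk vs (?p x) < length vs - rk vs x" by simp
        then obtain r where "r \<in> {1..n} - ?T" "connected_in ?ET (?p x) r"
          using less.hyps px(1) by blast
        then show ?thesis using c1 conn_trans by blast
      qed
    qed
  qed
  have uq: "\<forall>x\<in>{1..n}. \<exists>!r. r \<in> {1..n} - ?T \<and> connected_in ?ET x r"
  proof
    fix x assume "x \<in> {1..n}"
    then obtain r where r: "r \<in> {1..n} - ?T" "connected_in ?ET x r" using ex by blast
    moreover have "r' = r" if "r' \<in> {1..n} - ?T" "connected_in ?ET x r'" for r'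
    proof -
      have "connected_in ?ET r' r" using conn_trans[OF conn_sym[OF that(2)] r(2)] .
      then show ?thesis using not_conn that(1) r(1) by blast
    qed
    ultimately show "\<exists>!r. r \<in> {1..n} - ?T \<and> connected_in ?ET x r" by blast
  qed
  show ?thesis unfolding chain_forest_def SF_def using e nc uq by blast
qed

lemma Pcond_covers:
  assumes F: "F \<in> SF n" and d: "distinct vs" and sv: "set vs = {1..n} - roots_of F"
    and P: "Pcond F vs"
  shows "\<forall>i < length vs. sf_covers n (chain_forest n F vs i) (chain_forest n F vs (Suc i))"
proof (intro allI impI)
  fix k assume k: "k < length vs"
  define v where "v = vs ! k"
  let ?T = "set (take k vs)"
  let ?ET = "(\<lambda>v. {v, parent F v}) ` ?T"
  have tk: "take (Suc k) vs = take k vs @ [v]" using k v_def by (simp add: take_Suc_conv_app_nth)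
  have vT: "v \<notin> ?T" using nth_in_take[OF d k, of k] v_def by simp
  have vn: "v \<in> {1..n}" "v \<notin> roots_of F" using nth_mem[OF k] sv v_def by auto
  have pv: "parent F v \<in> {1..n}" "parent F v \<noteq> v" using parent_props[OF F vn] by auto
  have pT: "parent F v \<notin> set (take (Suc k) vs)" using P k v_def unfolding Pcond_def by auto
  then have pT': "parent F v \<notin> ?T" using tk by simp
  have nc: "\<not> connected_in ?ET v (parent F v)" using not_conn[of "parent F" ?T v "parent F v"] vT pT' pv(2) by metis
  have ed: "edges_of (chain_forest n F vs (Suc k)) = insert {v, parent F v} (edges_of (chain_forest n F vs k))"
    unfolding chain_simps tk by simp
  have ro: "roots_of (chain_forest n F vs (Suc k)) = roots_of (chain_forest n F vs k) - {v}"
    unfolding chain_simps tk by auto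
  show "sf_covers n (chain_forest n F vs k) (chain_forest n F vs (Suc k))"
    unfolding sf_covers_def
    using chain_SF[OF F d sv P] ed ro nc vT pT' vn pv unfolding chain_simps by blast
qed

theorem lemma5p11:
  fixes n :: nat and F :: forest and vs :: "nat list"
  assumes "F \<in> SF n"
    and "distinct vs"
    and "set vs = {1..n} - roots_of F"
  shows "(\<forall>i < length vs. sf_covers n (chain_forest n F vs i) (chain_forest n F vs (Suc i)))
     \<longleftrightarrow> (\<forall>i < length vs. \<forall>j < length vs. descendant F (vs ! i) (vs ! j) \<longrightarrow> i < j)"
proof
  assume "\<forall>i < length vs. sf_covers n (chain_forest n F vs i) (chain_forest n F vs (Suc i))"
  then have "Pcond F vs" using covers_Pcond[OF assms(2)] assms(3) by blast
  then show "\<forall>i < length vs. \<forall>j < length vs. descendant F (vs ! i) (vs ! j) \<longrightarrow> i < j"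
    using Pcond_linext[OF assms] by blast
next
  assume "\<forall>i < length vs. \<forall>j < length vs. descendant F (vs ! i) (vs ! j) \<longrightarrow> i < j"
  then have "Pcond F vs" using linext_Pcond[OF assms] by blast
  then show "\<forall>i < length vs. sf_covers n (chain_forest n F vs i) (chain_forest n F vs (Suc i))"
    using Pcond_covers[OF assms] by blast
qed

end
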